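(* There does not exist a quasi-3 design with parameters $2$-$(267,57,12)$ and triple intersection numbers $x=0$, $y=3$.
   Context: A $2$-$(v,k,\lambda)$ design is a pair $(X,\mathcal{B})$ where $X$ is a set of $v$ points and $\mathcal{B}$ is a collection of $k$-subsets of $X$ (blocks) such that every $2$-subset of $X$ is contained in exactly $\lambda$ blocks. It is symmetric if the number of blocks equals $v$. A symmetric $2$-$(v,k,\lambda)$ design is a quasi-3 design with triple intersection numbers $x<y$ if any three distinct blocks have exactly $x$ or exactly $y$ points in common. *)

theory Defs
  imports Main
begin

text \<open>A 2-(v,k,lambda) design: point set X with v points, and a family of blocks
  indexed by a finite set I (a collection, so repeated blocks are allowed),
  each block a k-subset of X, every 2-subset of X contained in exactly lambda blocks
  (counted with multiplicity, i.e. counted by index).\<close>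
definition design2 :: "'a set \<Rightarrow> 'i set \<Rightarrow> ('i \<Rightarrow> 'a set) \<Rightarrow> nat \<Rightarrow> nat \<Rightarrow> nat \<Rightarrow> bool" where
  "design2 X I B v k lam \<longleftrightarrow>
     finite X \<and> card X = v \<and> finite I \<and>
     (\<forall>i\<in>I. B i \<subseteq> X \<and> card (B i) = k) \<and>
     (\<forall>p\<in>X. \<forall>q\<in>X. p \<noteq> q \<longrightarrow> card {i\<in>I. {p, q} \<subseteq> B i} = lam)"

definition symmetric_design2 :: "'a set \<Rightarrow> 'i set \<Rightarrow> ('i \<Rightarrow> 'a set) \<Rightarrow> nat \<Rightarrow> nat \<Rightarrow> nat \<Rightarrow> bool" where
  "symmetric_design2 X I B v k lam \<longleftrightarrow> design2 X I B v k lam \<and> card I = v"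

definition quasi3_design :: "'a set \<Rightarrow> 'i set \<Rightarrow> ('i \<Rightarrow> 'a set) \<Rightarrow> nat \<Rightarrow> nat \<Rightarrow> nat \<Rightarrow> nat \<Rightarrow> nat \<Rightarrow> bool" where
  "quasi3_design X I B v k lam x y \<longleftrightarrow>
     symmetric_design2 X I B v k lam \<and> x < y \<and>
     (\<forall>i\<in>I. \<forall>j\<in>I. \<forall>l\<in>I. i \<noteq> j \<and> i \<noteq> l \<and> j \<noteq> l \<longrightarrow>
        card (B i \<inter> B j \<inter> B l) = x \<or> card (B i \<inter> B j \<inter> B l) = y)"

end

theory Submission
  imports Defs Complex_Main
begin

definition lin :: "((nat \<Rightarrow> rat) \<Rightarrow> rat) \<Rightarrow> bool" where
  "lin f \<longleftrightarrow> (\<forall>u v. f (\<lambda>i. u i + v i) = f u + f v) \<and> (\<forall>c u. f (\<lambda>i. c * u i) = c * f u)"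

lemma lin_split:
  assumes "lin f"
  shows "f w = f (w(j:=0)) + w j * f (\<lambda>i. if i = j then 1 else 0)"
proof -
  have add: "\<And>u v. f (\<lambda>i. u i + v i) = f u + f v" and hom: "\<And>c u. f (\<lambda>i. c * u i) = c * f u"
    using assms by (auto simp: lin_def)
  have "f w = f (\<lambda>i. (w(j:=0)) i + (\<lambda>i. w j * (if i = j then 1 else 0)) i)"
    by (rule arg_cong[where f=f]) (auto simp: fun_eq_iff)
  also have "\<dots> = f (w(j:=0)) + f (\<lambda>i. w j * (if i = j then 1 else 0))"
    by (rule add)
  also have "f (\<lambda>i. w j * (if i = j then 1 else 0)) = w j * f (\<lambda>i. if i = j then 1 else 0)"
    by (rule hom)
  finally show ?thesis .
qed

lemma elim:
  assumes "finite K"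
  shows "z \<notin> K \<Longrightarrow> (\<forall>j\<in>K. lin (f j)) \<Longrightarrow> \<exists>w. w z = 1 \<and> (\<forall>j\<in>K. (f j w)^2 = (w j)^2)"
  using assms
proof (induction K arbitrary: f rule: finite_induct)
  case empty then show ?case by (intro exI[of _ "\<lambda>_. 1"]) simp
next
  case (insert j0 K)
  define e where "e = (\<lambda>i::nat. if i = j0 then (1::rat) else 0)"
  define c where "c = f j0 e"
  define \<epsilon> where "\<epsilon> = (if c = 1 then -1 else (1::rat))"
  have eps2: "\<epsilon> * \<epsilon> = 1" by (simp add: \<epsilon>_def)
  have den: "1 - \<epsilon> * c \<noteq> 0" by (auto simp: \<epsilon>_def)
  define \<phi> where "\<phi> = (\<lambda>w::nat\<Rightarrow>rat. \<epsilon> * f j0 (w(j0:=0)) / (1 - \<epsilon> * c))"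
  define g where "g = (\<lambda>j w. f j (w(j0 := \<phi> w)))"
  have linj0: "lin (f j0)" using insert by simp
  have \<phi>add: "\<phi> (\<lambda>i. u i + v i) = \<phi> u + \<phi> v" for u v
  proof -
    have "(\<lambda>i. u i + v i)(j0:=0) = (\<lambda>i. (u(j0:=0)) i + (v(j0:=0)) i)" by auto
    then show ?thesis using linj0 unfolding \<phi>_def lin_def by (simp add: add_divide_distrib distrib_left fun_upd_def)
  qed
  have \<phi>hom: "\<phi> (\<lambda>i. a * u i) = a * \<phi> u" for a u
  proof -
    have "(\<lambda>i. a * u i)(j0:=0) = (\<lambda>i. a * (u(j0:=0)) i)" by auto
    then show ?thesis using linj0 unfolding \<phi>_def lin_def by (simp add: fun_upd_def)
  qed
  have lg: "lin (g j)" if "j \<in> K" for j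
  proof -
    have lj: "lin (f j)" using insert that by simp
    show ?thesis unfolding lin_def g_def
    proof (intro conjI allI)
      fix u v
      have "(\<lambda>i. u i + v i)(j0 := \<phi> (\<lambda>i. u i + v i)) = (\<lambda>i. (u(j0:=\<phi> u)) i + (v(j0:=\<phi> v)) i)"
        using \<phi>add by (auto simp: fun_eq_iff)
      then show "f j ((\<lambda>i. u i + v i)(j0 := \<phi> (\<lambda>i. u i + v i))) = f j (u(j0 := \<phi> u)) + f j (v(j0 := \<phi> v))"
        using lj unfolding lin_def by (simp add: fun_upd_def)
    next
      fix a u
      have "(\<lambda>i. a * u i)(j0 := \<phi> (\<lambda>i. a * u i)) = (\<lambda>i. a * (u(j0:=\<phi> u)) i)"
        using \<phi>hom by (auto simp: fun_eq_iff)
      then show "f j ((\<lambda>i. a * u i)(j0 := \<phi> (\<lambda>i. a * u i))) = a * f j (u(j0 := \<phi> u))"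
        using lj unfolding lin_def by (simp add: fun_upd_def)
    qed
  qed
  have "z \<notin> K" using insert.prems by auto
  then obtain w where w: "w z = 1" "\<forall>j\<in>K. (g j w)^2 = (w j)^2" using insert.IH[of g] lg insert.prems by auto
  define w' where "w' = w(j0 := \<phi> w)"
  have "z \<noteq> j0" using insert.prems by auto
  show ?case
  proof (intro exI[of _ w'] conjI ballI)
    show "w' z = 1" using \<open>z\<noteq>j0\<close> w by (simp add: w'_def)
    fix j assume "j \<in> insert j0 K"
    then consider "j = j0" | "j \<in> K" "j \<noteq> j0" using insert.hyps by auto
    then show "(f j w')^2 = (w' j)^2"
    proof cases
      case 1
      have "f j0 w' = f j0 (w'(j0:=0)) + w' j0 * c" using lin_split[OF linj0] c_def e_def by simp
      also have "w'(j0:=0) = w(j0:=0)" by (simp add: w'_def)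
      finally have eq: "f j0 w' = f j0 (w(j0:=0)) + \<phi> w * c" by (simp add: w'_def fun_upd_def)
      have "\<phi> w * (1 - \<epsilon>*c) = \<epsilon> * f j0 (w(j0:=0))" using den by (simp add: \<phi>_def)
      then have "\<epsilon> * (\<phi> w * (1 - \<epsilon>*c)) = \<epsilon> * \<epsilon> * f j0 (w(j0:=0))" by simp
      then have "\<epsilon> * \<phi> w - (\<epsilon> * \<epsilon>) * c * \<phi> w = (\<epsilon> * \<epsilon>) * f j0 (w(j0:=0))"
        by (simp add: algebra_simps)
      then have "f j0 (w(j0:=0)) = \<epsilon> * \<phi> w - c * \<phi> w" unfolding eps2 by simp
      then have "f j0 w' = \<epsilon> * \<phi> w" using eq eps2 by simp
      then show ?thesis using 1 eps2 by (simp add: w'_def power2_eq_square algebra_simps)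
    next
      case 2
      then show ?thesis using w(2) by (simp add: g_def w'_def)
    qed
  qed
qed

lemma e1: "(D^2 + 12 * B^2) mod 5 = ((D mod 5)^2 + 12 * (B mod 5)^2) mod (5::int)"
proof -
  have a: "D^2 mod 5 = (D mod 5)^2 mod (5::int)" by (simp add: power_mod)
  have b: "(12 * B^2) mod 5 = (12 * (B mod 5)^2) mod (5::int)"
    by (metis mod_mult_right_eq power_mod)
  show ?thesis by (metis a b mod_add_eq)
qed

lemma mod5_sq: "(D^2 + 12 * B^2) mod 5 = (0::int) \<Longrightarrow> D mod 5 = 0 \<and> B mod 5 = 0"
proof -
  assume h: "(D^2 + 12 * B^2) mod 5 = (0::int)"
  have e: "((D mod 5)^2 + 12 * (B mod 5)^2) mod 5 = 0" using e1 h by simp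
  have "D mod 5 \<in> {0,1,2,3,4}" "B mod 5 \<in> {0,1,2,3,4}" by auto
  then show ?thesis using e by auto
qed

lemma mod5_9: "(9 * A^2) mod 5 = (0::int) \<Longrightarrow> A mod 5 = 0"
proof -
  assume h: "(9 * A^2) mod 5 = (0::int)"
  have b: "(9 * A^2) mod 5 = (9 * (A mod 5)^2) mod (5::int)"
    by (metis mod_mult_right_eq power_mod)
  have e: "(9 * (A mod 5)^2) mod 5 = 0" using b h by simp
  have "A mod 5 \<in> {0,1,2,3,4}" by auto
  then show ?thesis using e by auto
qed

lemma descent_int: "45 * A^2 = D^2 + 12 * B^2 \<Longrightarrow> D = (0::int)"
proof (induction "nat \<bar>D\<bar>" arbitrary: A B D rule: less_induct)
  case less
  show ?case
  proof (rule ccontr)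
    assume D0: "D \<noteq> 0"
    have "(45 * A^2) mod 5 = (0::int)" by simp
    then have "(D^2 + 12 * B^2) mod 5 = 0" using less.prems by simp
    from mod5_sq[OF this] have "D mod 5 = 0" "B mod 5 = 0" by simp_all
    then have "5 dvd D" "5 dvd B" using mod_0_imp_dvd by blast+
    then obtain D' B' where D': "D = 5 * D'" and B': "B = 5 * B'" by (auto elim!: dvdE)
    have "45 * A^2 = 25 * (D'^2 + 12 * B'^2)" using less.prems unfolding D' B' by (simp add: power_mult_distrib)
    then have eq1: "9 * A^2 = 5 * (D'^2 + 12 * B'^2)" by simp
    then have "(9 * A^2) mod 5 = 0" by simp
    then have "A mod 5 = 0" by (rule mod5_9)
    then have "5 dvd A" using mod_0_imp_dvd by blast
    then obtain A' where A': "A = 5 * A'" by (auto elim!: dvdE)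
    have eq2: "45 * A'^2 = D'^2 + 12 * B'^2" using eq1 unfolding A' by (simp add: power_mult_distrib)
    have "nat \<bar>D'\<bar> < nat \<bar>D\<bar>" using D0 unfolding D' by simp
    then have "D' = 0" using less.hyps eq2 by blast
    then show False using D0 D' by simp
  qed
qed

lemma no_rat: "\<not> (45 * (a::rat)^2 = 1 + 12 * b^2)"
proof
  assume h: "45 * a^2 = 1 + 12 * b^2"
  obtain A1 D1 where qa: "quotient_of a = (A1, D1)" by (cases "quotient_of a") auto
  obtain B1 D2 where qb: "quotient_of b = (B1, D2)" by (cases "quotient_of b") auto
  have a: "a = of_int A1 / of_int D1" and d1: "D1 > 0" using qa quotient_of_div quotient_of_denom_pos by auto
  have b: "b = of_int B1 / of_int D2" and d2: "D2 > 0" using qb quotient_of_div quotient_of_denom_pos by auto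
  have "45 * (of_int A1 / of_int D1)^2 = 1 + 12 * (of_int B1 / of_int D2 :: rat)^2" using h a b by simp
  then have "45 * (of_int A1)^2 * of_int D2^2 = (of_int D1^2 * of_int D2^2) + 12 * (of_int B1)^2 * (of_int D1^2 :: rat)"
    using d1 d2 by (simp add: field_simps power2_eq_square)
  then have "of_int (45 * (A1*D2)^2) = (of_int ((D1*D2)^2 + 12 * (B1*D1)^2) :: rat)"
    by (simp add: power_mult_distrib)
  then have "45 * (A1*D2)^2 = (D1*D2)^2 + 12 * (B1*D1)^2" by (simp only: of_int_eq_iff)
  then have "D1 * D2 = 0" by (rule descent_int)
  then show False using d1 d2 by simp
qed

lemma sum_pairs: "(\<Sum>p<2*(n::nat). f p) = (\<Sum>k<n. f (2*k) + f (2*k+1))"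
  by (induction n) (simp_all add: algebra_simps)

lemma quad_id:
  fixes a :: "nat \<Rightarrow> nat \<Rightarrow> rat" and y :: "nat \<Rightarrow> rat"
  assumes "\<And>p q. p < n \<Longrightarrow> q < n \<Longrightarrow> (\<Sum>j<m. a p j * a q j) = (if p = q then 57 else 12)"
  shows "(\<Sum>j<m. (\<Sum>p<n. a p j * y p)^2) = 45 * (\<Sum>p<n. (y p)^2) + 12 * (\<Sum>p<n. y p)^2"
proof -
  have "(\<Sum>j<m. (\<Sum>p<n. a p j * y p)^2) = (\<Sum>j<m. \<Sum>p<n. \<Sum>q<n. (a p j * y p) * (a q j * y q))"
    by (simp add: power2_eq_square sum_product)
  also have "\<dots> = (\<Sum>p<n. \<Sum>j<m. \<Sum>q<n. (a p j * y p) * (a q j * y q))"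
    by (rule sum.swap)
  also have "\<dots> = (\<Sum>p<n. \<Sum>q<n. \<Sum>j<m. (a p j * y p) * (a q j * y q))"
    by (intro sum.cong refl sum.swap)
  also have "\<dots> = (\<Sum>p<n. \<Sum>q<n. y p * y q * (\<Sum>j<m. a p j * a q j))"
    by (simp add: sum_distrib_left mult_ac)
  also have "\<dots> = (\<Sum>p<n. \<Sum>q<n. y p * y q * (if p = q then 57 else 12))"
    by (intro sum.cong refl) (simp add: assms)
  also have "\<dots> = (\<Sum>p<n. (\<Sum>q<n. 12 * (y p * y q)) + 45 * (y p)^2)"
  proof (intro sum.cong refl)
    fix p assume p: "p \<in> {..<n}"
    have "(\<Sum>q<n. y p * y q * (if p = q then 57 else 12)) = (\<Sum>q<n. 12 * (y p * y q) + (if p = q then 45 * (y p)^2 else 0))"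
      by (intro sum.cong refl) (auto simp: power2_eq_square)
    also have "\<dots> = (\<Sum>q<n. 12 * (y p * y q)) + 45 * (y p)^2"
      using p by (simp add: sum.distrib)
    finally show "(\<Sum>q<n. y p * y q * (if p = q then 57 else 12)) = (\<Sum>q<n. 12 * (y p * y q)) + 45 * (y p)^2" .
  qed
  also have "\<dots> = (\<Sum>p<n. \<Sum>q<n. 12 * (y p * y q)) + 45 * (\<Sum>p<n. (y p)^2)"
    by (simp add: sum.distrib sum_distrib_left)
  also have "(\<Sum>p<n. \<Sum>q<n. 12 * (y p * y q)) = 12 * (\<Sum>p<n. y p)^2"
  proof -
    have "(\<Sum>p<n. \<Sum>q<n. 12 * (y p * y q)) = 12 * (\<Sum>p<n. \<Sum>q<n. y p * y q)"
      by (simp add: sum_distrib_left)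
    also have "(\<Sum>p<n. \<Sum>q<n. y p * y q) = (\<Sum>p<n. y p) * (\<Sum>q<n. y q)"
      by (simp add: sum_product)
    finally have "(\<Sum>p<n. \<Sum>q<n. 12 * (y p * y q)) = 12 * ((\<Sum>p<n. y p) * (\<Sum>q<n. y q))" .
    then show ?thesis by (simp add: power2_eq_square)
  qed
  finally show ?thesis by simp
qed

lemma replication:
  assumes fX: "finite X" and cX: "card X = 267" and fI: "finite I"
    and blk: "\<forall>i\<in>I. B i \<subseteq> X \<and> card (B i) = 57"
    and pr: "\<forall>p\<in>X. \<forall>q\<in>X. p \<noteq> q \<longrightarrow> card {i\<in>I. {p,q} \<subseteq> B i} = 12"
    and p: "p \<in> X"
  shows "card {i\<in>I. p \<in> B i} = 57"
proof -
  let ?Ip = "{i\<in>I. p \<in> B i}"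
  have fIp: "finite ?Ip" using fI by simp
  have "(\<Sum>q\<in>X-{p}. card {i\<in>I. {p,q} \<subseteq> B i}) = (\<Sum>q\<in>X-{p}. \<Sum>i\<in>?Ip. if q \<in> B i then 1 else (0::nat))"
  proof (rule sum.cong[OF refl])
    fix q assume "q \<in> X - {p}"
    have "{i\<in>I. {p,q} \<subseteq> B i} = {i\<in>?Ip. q \<in> B i}" by auto
    moreover have "card {i\<in>?Ip. q \<in> B i} = (\<Sum>i\<in>?Ip. if q \<in> B i then 1 else 0)"
      using fIp by (simp add: sum.If_cases Int_def)
    ultimately show "card {i\<in>I. {p,q} \<subseteq> B i} = (\<Sum>i\<in>?Ip. if q \<in> B i then 1 else 0)" by simp
  qed
  also have "\<dots> = (\<Sum>i\<in>?Ip. \<Sum>q\<in>X-{p}. if q \<in> B i then 1 else (0::nat))"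
    by (rule sum.swap)
  also have "\<dots> = (\<Sum>i\<in>?Ip. 56)"
  proof (rule sum.cong[OF refl])
    fix i assume i: "i \<in> ?Ip"
    have "B i - {p} = {q\<in>X-{p}. q \<in> B i}" using i blk by auto
    moreover have "card {q\<in>X-{p}. q \<in> B i} = (\<Sum>q\<in>X-{p}. if q \<in> B i then 1 else 0)"
      using fX by (simp add: sum.If_cases Int_def)
    moreover have "card (B i - {p}) = 56" using i blk by (simp add: card_Diff_singleton)
    ultimately show "(\<Sum>q\<in>X-{p}. if q \<in> B i then 1 else (0::nat)) = 56" by simp
  qed
  finally have "(\<Sum>q\<in>X-{p}. card {i\<in>I. {p,q} \<subseteq> B i}) = card ?Ip * 56" by simp
  moreover have "(\<Sum>q\<in>X-{p}. card {i\<in>I. {p,q} \<subseteq> B i}) = (\<Sum>q\<in>X-{p}. 12)"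
    using pr p by (intro sum.cong refl) auto
  moreover have "card (X - {p}) = 266" using p cX fX by (simp add: card_Diff_singleton)
  ultimately have "card ?Ip * 56 = 266 * 12" by simp
  then show ?thesis by simp
qed

theorem theorem2:
  fixes X :: "'a set" and I :: "'i set" and B :: "'i \<Rightarrow> 'a set"
  shows "\<not> quasi3_design X I B 267 57 12 0 3"
proof
  assume q: "quasi3_design X I B 267 57 12 0 3"
  then have d: "design2 X I B 267 57 12" and cI: "card I = 267"
    by (auto simp: quasi3_design_def symmetric_design2_def)
  from d have fX: "finite X" and cX: "card X = 267" and fI: "finite I"
    and blk: "\<forall>i\<in>I. B i \<subseteq> X \<and> card (B i) = 57"
    and pr: "\<forall>p\<in>X. \<forall>q\<in>X. p \<noteq> q \<longrightarrow> card {i\<in>I. {p,q} \<subseteq> B i} = 12"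
    by (auto simp: design2_def)
  obtain g where g: "bij_betw g {..<267::nat} X"
    using ex_bij_betw_nat_finite[OF fX] cX by (auto simp: atLeast0LessThan)
  obtain h where h: "bij_betw h {..<267::nat} I"
    using ex_bij_betw_nat_finite[OF fI] cI by (auto simp: atLeast0LessThan)
  define a where "a = (\<lambda>p j. if g p \<in> B (h j) then (1::rat) else 0)"
  have aa: "(\<Sum>j<267. a p j * a q j) = (if p = q then 57 else 12)" if pq: "p < 267" "q < 267" for p q
  proof -
    have gp: "g p \<in> X" "g q \<in> X" using g pq by (auto simp: bij_betw_def)
    have "(\<Sum>j<267. a p j * a q j) = (\<Sum>j<267. (\<lambda>i. if g p \<in> B i \<and> g q \<in> B i then 1 else (0::rat)) (h j))"
      by (intro sum.cong refl) (simp add: a_def)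
    also have "\<dots> = (\<Sum>i\<in>I. if g p \<in> B i \<and> g q \<in> B i then 1 else (0::rat))"
      by (rule sum.reindex_bij_betw[OF h])
    also have "\<dots> = of_nat (card {i\<in>I. g p \<in> B i \<and> g q \<in> B i})"
      using fI by (simp add: sum.If_cases Int_def)
    finally have e: "(\<Sum>j<267. a p j * a q j) = of_nat (card {i\<in>I. g p \<in> B i \<and> g q \<in> B i})" .
    show ?thesis
    proof (cases "p = q")
      case True
      then show ?thesis using e replication[OF fX cX fI blk pr gp(1)] by simp
    next
      case False
      then have "g p \<noteq> g q" using g pq by (auto simp: bij_betw_def inj_on_def)
      then have "card {i\<in>I. {g p, g q} \<subseteq> B i} = 12" using pr gp by auto
      then show ?thesis using e False by simp
    qed
  qed
  define xf where "xf = (\<lambda>(w::nat\<Rightarrow>rat) p. if even p then (6 * w p + 3 * w (Suc p)) / 45 else (3 * w (p - 1) - 6 * w p) / 45)"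
  define L where "L = (\<lambda>j w. \<Sum>p<267. a p j * xf w p)"
  have xadd: "xf (\<lambda>i. u i + v i) p = xf u p + xf v p" for u v p
    by (simp add: xf_def field_simps)
  have xhom: "xf (\<lambda>i. c * u i) p = c * xf u p" for c u p
    by (simp add: xf_def field_simps)
  have linL: "\<forall>j\<in>{..<267}. lin (L j)"
    by (auto simp: lin_def L_def xadd xhom sum.distrib sum_distrib_left algebra_simps)
  obtain w where w1: "w 267 = 1" and wc: "\<forall>j\<in>{..<267}. (L j w)^2 = (w j)^2"
    using elim[of "{..<267}" 267 L] linL by auto
  have pairs: "45 * (\<Sum>p<268. (xf w p)^2) = (\<Sum>p<268. (w p)^2)"
  proof -
    have "45 * (\<Sum>p<2*134. (xf w p)^2) = (\<Sum>k<134. 45 * ((xf w (2*k))^2 + (xf w (2*k+1))^2))"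
      by (simp only: sum_pairs sum_distrib_left)
    also have "\<dots> = (\<Sum>k<134. (w (2*k))^2 + (w (2*k+1))^2)"
      by (intro sum.cong refl) (simp add: xf_def power2_eq_square field_simps)
    also have "\<dots> = (\<Sum>p<2*134. (w p)^2)" by (simp only: sum_pairs)
    finally show ?thesis by simp
  qed
  have qi: "(\<Sum>j<267. (L j w)^2) = 45 * (\<Sum>p<267. (xf w p)^2) + 12 * (\<Sum>p<267. xf w p)^2"
    unfolding L_def by (rule quad_id) (rule aa)
  have s268: "Suc 267 = (268::nat)" by simp
  have "(\<Sum>j<267. (L j w)^2) = (\<Sum>j<267. (w j)^2)"
    using wc by (intro sum.cong refl) auto
  moreover have "(\<Sum>p<268. (xf w p)^2) = (\<Sum>p<267. (xf w p)^2) + (xf w 267)^2"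
    using sum.lessThan_Suc[of "\<lambda>p. (xf w p)^2" 267] by (simp only: s268)
  moreover have "(\<Sum>p<268. (w p)^2) = (\<Sum>p<267. (w p)^2) + (w 267)^2"
    using sum.lessThan_Suc[of "\<lambda>p. (w p)^2" 267] by (simp only: s268)
  ultimately have "45 * (xf w 267)^2 = 1 + 12 * (\<Sum>p<267. xf w p)^2"
    using qi pairs w1 by (simp add: algebra_simps)
  then show False using no_rat by blast
qed

end
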